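(* There exists a constant $C$ (independent of $N$ and $t$) such that, for the processes $x^t$ and $\overline{x}^t$ described in the context, $$\mathbb{E}\big(|\overline{x}^t-x^t|^2\big)\le C N^{-1}\quad\text{for all } t\ge 0.$$
   Context: Two patches have hosting capacities $N_1=N$ and $N_2=dN$, with $d=N_2/N_1\in(0,1]$ fixed; $\kappa>0$ fixed, $\delta t=1/N$, $\kappa\delta t\le 1$. Let $M=\begin{pmatrix} d & -d\\ -1 & 1\end{pmatrix}$ and $A=\mathrm{Id}-\frac{\kappa}{N}M$. For a function $g$ on $\mathcal D=[0,1]^2$ define $$B_N(g)(x)=\sum_{j_1=0}^{N_1}\sum_{j_2=0}^{N_2}\binom{N_1}{j_1}\binom{N_2}{j_2}x_1^{j_1}(1-x_1)^{N_1-j_1}x_2^{j_2}(1-x_2)^{N_2-j_2}\,g\!\left(\tfrac{j_1}{N_1},\tfrac{j_2}{N_2}\right).$$ $(x^n)_{n\ge0}$ is the Markov chain in $\mathcal D$ with transition kernel $\mathbb{E}(f(x^{n+1})\mid x^n=x)=B_N(f\circ A)(x)$. The càdlàg process is $\overline{x}^t=x^n$ for $n\delta t\le t<(n+1)\delta t$, and $x^t$ is the continuous piecewise linear-in-time process with $x^t=x^n$ at $t=n\delta t$. $|\cdot|$ is the Euclidean norm. *)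

theory Defs
  imports "HOL-Probability.Probability"
begin

text \<open>Two patches, N1 = N, N2 = d N; points of R^2 are pairs (x1, x2), with
  the Euclidean norm (norm on real \<times> real is sqrt (x1^2 + x2^2)).\<close>

definition dom_D :: "(real \<times> real) set" where
  "dom_D = {x. 0 \<le> fst x \<and> fst x \<le> 1 \<and> 0 \<le> snd x \<and> snd x \<le> 1}"

definition dt :: "nat \<Rightarrow> real" where
  "dt N = 1 / real N"

definition Mmat :: "real \<Rightarrow> real \<times> real \<Rightarrow> real \<times> real" where
  "Mmat d y = (d * fst y - d * snd y, - fst y + snd y)"

definition Amap :: "real \<Rightarrow> real \<Rightarrow> nat \<Rightarrow> real \<times> real \<Rightarrow> real \<times> real" where
  "Amap d \<kappa> N y = y - (\<kappa> / real N) *\<^sub>R Mmat d y"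

definition B_N :: "nat \<Rightarrow> nat \<Rightarrow> (real \<times> real \<Rightarrow> real) \<Rightarrow> real \<times> real \<Rightarrow> real" where
  "B_N N1 N2 g x = (\<Sum>j1\<le>N1. \<Sum>j2\<le>N2.
      real (N1 choose j1) * real (N2 choose j2) *
      fst x ^ j1 * (1 - fst x) ^ (N1 - j1) * snd x ^ j2 * (1 - snd x) ^ (N2 - j2) *
      g (real j1 / real N1, real j2 / real N2))"

text \<open>Transition kernel of the chain: x^{n+1} = A (j1/N1, j2/N2) with j1, j2 independent
  binomials B(N1, x1), B(N2, x2); hence E(f(x^{n+1}) | x^n = x) = B_N (f o A) x.\<close>
definition trans_kernel :: "real \<Rightarrow> real \<Rightarrow> nat \<Rightarrow> nat \<Rightarrow> real \<times> real \<Rightarrow> (real \<times> real) pmf" where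
  "trans_kernel d \<kappa> N N2 x =
     map_pmf (\<lambda>(j1, j2). Amap d \<kappa> N (real j1 / real N, real j2 / real N2))
       (pair_pmf (binomial_pmf N (fst x)) (binomial_pmf N2 (snd x)))"

fun chain_path :: "real \<Rightarrow> real \<Rightarrow> nat \<Rightarrow> nat \<Rightarrow> (real \<times> real) pmf \<Rightarrow> nat \<Rightarrow> (real \<times> real) list pmf" where
  "chain_path d \<kappa> N N2 p0 0 = map_pmf (\<lambda>x. [x]) p0"
| "chain_path d \<kappa> N N2 p0 (Suc m) =
     bind_pmf (chain_path d \<kappa> N N2 p0 m)
       (\<lambda>xs. map_pmf (\<lambda>y. xs @ [y]) (trans_kernel d \<kappa> N N2 (last xs)))"

definition step_idx :: "nat \<Rightarrow> real \<Rightarrow> nat" where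
  "step_idx N t = nat \<lfloor>t / dt N\<rfloor>"

definition xbar :: "nat \<Rightarrow> real \<Rightarrow> (real \<times> real) list \<Rightarrow> real \<times> real" where
  "xbar N t xs = xs ! step_idx N t"

definition xlin :: "nat \<Rightarrow> real \<Rightarrow> (real \<times> real) list \<Rightarrow> real \<times> real" where
  "xlin N t xs = (let n = step_idx N t in
      xs ! n + ((t - real n * dt N) / dt N) *\<^sub>R (xs ! (Suc n) - xs ! n))"

end

theory Submission
  imports Defs
begin


lemma bsum0: "(\<Sum>k\<le>n. real (n choose k) * p^k * (1-p)^(n-k)) = 1"
  using binomial_ring[of p "1-p" n] by simp

lemma bsum1: "(\<Sum>k\<le>n. real (n choose k) * p^k * (1-p)^(n-k) * real k) = real n * p"
proof (cases n)
  case 0 then show ?thesis by simp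
next
  case (Suc m)
  have "(\<Sum>k\<le>Suc m. real (Suc m choose k) * p^k * (1-p)^(Suc m-k) * real k)
      = (\<Sum>j\<le>m. real (Suc m choose Suc j) * p^Suc j * (1-p)^(Suc m - Suc j) * real (Suc j))"
    by (subst sum.atMost_Suc_shift) simp
  also have "\<dots> = (\<Sum>j\<le>m. real (Suc m) * p * (real (m choose j) * p^j * (1-p)^(m-j)))"
  proof (rule sum.cong)
    fix j assume "j \<in> {..m}"
    have "real (Suc j) * real (Suc m choose Suc j) = real (Suc m) * real (m choose j)"
      using Suc_times_binomial[of j m] by (metis of_nat_mult)
    have "real (Suc m choose Suc j) * p^Suc j * (1-p)^(Suc m - Suc j) * real (Suc j)
        = (real (Suc j) * real (Suc m choose Suc j)) * (p * p^j * (1-p)^(m-j))"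
      by (simp add: mult_ac)
    also have "\<dots> = (real (Suc m) * real (m choose j)) * (p * p^j * (1-p)^(m-j))"
      using \<open>real (Suc j) * real (Suc m choose Suc j) = real (Suc m) * real (m choose j)\<close> by simp
    also have "\<dots> = real (Suc m) * p * (real (m choose j) * p^j * (1-p)^(m-j))"
      by (simp add: mult_ac)
    finally show "real (Suc m choose Suc j) * p^Suc j * (1-p)^(Suc m - Suc j) * real (Suc j)
        = real (Suc m) * p * (real (m choose j) * p^j * (1-p)^(m-j))" .
  qed simp
  also have "\<dots> = real (Suc m) * p" by (simp add: sum_distrib_left[symmetric] bsum0)
  finally show ?thesis using Suc by simp
qed

lemma bsum2: "(\<Sum>k\<le>n. real (n choose k) * p^k * (1-p)^(n-k) * (real k * (real k - 1))) = real n * (real n - 1) * p^2"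
proof (cases n)
  case 0 then show ?thesis by simp
next
  case (Suc m0)
  show ?thesis
  proof (cases m0)
    case 0 with Suc show ?thesis by simp
  next
    case (Suc m)
    have "(\<Sum>k\<le>Suc (Suc m). real (Suc (Suc m) choose k) * p^k * (1-p)^(Suc (Suc m)-k) * (real k * (real k - 1)))
      = (\<Sum>j\<le>m. real (Suc (Suc m) choose Suc (Suc j)) * p^Suc (Suc j) * (1-p)^(m - j) * (real (Suc (Suc j)) * real (Suc j)))"
      by (subst sum.atMost_Suc_shift, subst sum.atMost_Suc_shift) simp
    also have "\<dots> = (\<Sum>j\<le>m. real (Suc (Suc m)) * real (Suc m) * p^2 * (real (m choose j) * p^j * (1-p)^(m-j)))"
    proof (rule sum.cong)
      fix j assume "j \<in> {..m}"
      have a: "real (Suc (Suc j)) * real (Suc (Suc m) choose Suc (Suc j)) = real (Suc (Suc m)) * real (Suc m choose Suc j)"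
        using Suc_times_binomial[of "Suc j" "Suc m"] by (metis of_nat_mult)
      have b: "real (Suc j) * real (Suc m choose Suc j) = real (Suc m) * real (m choose j)"
        using Suc_times_binomial[of j m] by (metis of_nat_mult)
      have "real (Suc (Suc m) choose Suc (Suc j)) * (real (Suc (Suc j)) * real (Suc j))
          = real (Suc (Suc m)) * real (Suc m) * real (m choose j)"
      proof -
        have "real (Suc (Suc m) choose Suc (Suc j)) * (real (Suc (Suc j)) * real (Suc j))
           = (real (Suc (Suc j)) * real (Suc (Suc m) choose Suc (Suc j))) * real (Suc j)" by (simp only: mult_ac)
        also have "\<dots> = real (Suc (Suc m)) * (real (Suc j) * real (Suc m choose Suc j))" unfolding a by (simp only: mult_ac)
        also have "\<dots> = real (Suc (Suc m)) * real (Suc m) * real (m choose j)" unfolding b by (simp only: mult_ac)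
        finally show ?thesis .
      qed
      then show "real (Suc (Suc m) choose Suc (Suc j)) * p^Suc (Suc j) * (1-p)^(m - j) * (real (Suc (Suc j)) * real (Suc j))
        = real (Suc (Suc m)) * real (Suc m) * p^2 * (real (m choose j) * p^j * (1-p)^(m-j))"
        by (simp add: power2_eq_square)
    qed simp
    also have "\<dots> = real (Suc (Suc m)) * real (Suc m) * p^2" by (simp add: sum_distrib_left[symmetric] bsum0)
    finally have eq: "(\<Sum>k\<le>Suc (Suc m). real (Suc (Suc m) choose k) * p^k * (1-p)^(Suc (Suc m)-k) * (real k * (real k - 1))) = real (Suc (Suc m)) * real (Suc m) * p^2" .
    have n: "n = Suc (Suc m)" using Suc \<open>n = Suc m0\<close> by simp
    have r: "real n * real (Suc m) * p^2 = real n * (real n - 1) * p^2" using n by simp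
    show ?thesis using trans[OF eq[folded n] r] .
  qed
qed

lemma var_aux: "(n::real) \<noteq> 0 \<Longrightarrow> w * (k / n - p)^2 = (1 / n^2) * (w * (k * (k - 1))) + (1/n^2 - 2*p/n) * (w * k) + p^2 * w"
  by (simp add: field_simps power2_eq_square)

lemma binom_var:
  assumes p: "p \<in> {0..1}" and n: "0 < n"
  shows "measure_pmf.expectation (binomial_pmf n p) (\<lambda>k. (real k / real n - p)^2) = p * (1 - p) / real n"
proof -
  let ?w = "\<lambda>k. real (n choose k) * p^k * (1-p)^(n-k)"
  have "measure_pmf.expectation (binomial_pmf n p) (\<lambda>k. (real k / real n - p)^2)
      = (\<Sum>k\<le>n. ?w k * (real k / real n - p)^2)"
    by (subst expectation_binomial_pmf'[OF p]) simp
  also have "\<dots> = (\<Sum>k\<le>n. (1 / real n^2) * (?w k * (real k * (real k - 1))) + (1/real n^2 - 2*p/real n) * (?w k * real k) + p^2 * ?w k)"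
    using n by (intro sum.cong refl var_aux) simp
  also have "\<dots> = (1 / real n^2) * (real n * (real n - 1) * p^2) + (1/real n^2 - 2*p/real n) * (real n * p) + p^2"
    by (simp only: sum.distrib sum_distrib_left[symmetric] bsum0 bsum1 bsum2 mult_1_right)
  also have "\<dots> = p * (1 - p) / real n"
    using n by (simp add: field_simps power2_eq_square)
  finally show ?thesis .
qed



lemma conv01:
  fixes a u v :: real
  assumes "0 \<le> a" "a \<le> 1" "0 \<le> u" "u \<le> 1" "0 \<le> v" "v \<le> 1"
  shows "0 \<le> (1-a)*u + a * v" "(1-a)*u + a * v \<le> 1"
proof -
  show "0 \<le> (1-a)*u + a * v" using assms by (intro add_nonneg_nonneg mult_nonneg_nonneg) auto
  have "(1-a)*u \<le> 1-a" using assms by (intro mult_left_le) auto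
  moreover have "a * v \<le> a" using assms by (intro mult_left_le) auto
  ultimately show "(1-a)*u + a * v \<le> 1" by simp
qed

lemma Amap_eq: "Amap d \<kappa> N (y1, y2) = ((1 - \<kappa>/real N*d)*y1 + (\<kappa>/real N*d)*y2, (1-\<kappa>/real N)*y2 + (\<kappa>/real N)*y1)"
  by (simp add: Amap_def Mmat_def algebra_simps diff_divide_distrib add_divide_distrib)

lemma Amap_D:
  assumes "0 < d" "d \<le> 1" "0 < \<kappa>" "\<kappa> / real N \<le> 1" "y \<in> dom_D"
  shows "Amap d \<kappa> N y \<in> dom_D"
proof -
  obtain y1 y2 where y: "y = (y1, y2)" by (cases y)
  let ?e = "\<kappa> / real N"
  have e0: "0 \<le> ?e" using assms by simp
  have ed: "?e * d \<le> 1" using assms e0 by (metis mult_le_one less_imp_le)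
  have ed0: "0 \<le> ?e * d" using e0 assms by simp
  from assms(5) have "0 \<le> y1" "y1 \<le> 1" "0 \<le> y2" "y2 \<le> 1" by (auto simp: dom_D_def y)
  then show ?thesis unfolding y Amap_eq dom_D_def
    using conv01[OF ed0 ed, of y1 y2] conv01[OF e0 assms(4), of y2 y1] by simp
qed

lemma bin_supp: "p \<in> {0..1} \<Longrightarrow> set_pmf (binomial_pmf n p) \<subseteq> {..n}"
  by (auto simp: set_pmf_binomial_eq split: if_splits)

lemma norm_sq_pair: "(norm (a::real, b::real))^2 = a^2 + b^2"
  by (simp add: norm_Pair)

lemma sq_diff_le: "((a::real) - b)^2 \<le> 2*a^2 + 2*b^2"
proof -
  have "0 \<le> (a + b)^2" by simp
  then show ?thesis by (simp add: power2_eq_square algebra_simps)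
qed

lemma lin4: fixes a1 a2 x1 x2 p1 p2 c :: real
  shows "a1 \<le> 2*x1 + 2*p1 \<Longrightarrow> a2 \<le> 2*x2 + 2*p2 \<Longrightarrow> p1 \<le> c \<Longrightarrow> p2 \<le> c \<Longrightarrow> a1 + a2 \<le> 2*(x1+x2) + 4*c"
  by (simp add: algebra_simps)

lemma pt_bound:
  fixes e d w u1 u2 :: real
  assumes "0 \<le> e" "e \<le> 1" "0 < d" "d \<le> 1" "\<bar>w\<bar> \<le> 1"
  shows "(u1 - e*d*w)^2 + (u2 + e*w)^2 \<le> 2*(u1^2 + u2^2) + 4*e"
proof -
  have "\<bar>w\<bar> * \<bar>w\<bar> \<le> 1 * 1" using assms by (intro mult_mono) auto
  hence w2: "w^2 \<le> 1" by (simp add: power2_eq_square abs_mult[symmetric])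
  have e2: "e^2 \<le> e" using assms by (simp add: power2_eq_square mult_left_le)
  have d2: "d^2 \<le> 1" using assms by (simp add: power2_eq_square mult_le_one)
  have "(e*d*w)^2 = e^2 * (d^2 * w^2)" by (simp add: power_mult_distrib)
  also have "\<dots> \<le> e * 1"
    using e2 d2 w2 assms by (intro mult_mono) (auto intro: mult_le_one)
  finally have A: "(e*d*w)^2 \<le> e" by simp
  have "(e*w)^2 = e^2 * w^2" by (simp add: power_mult_distrib)
  also have "\<dots> \<le> e * 1" using e2 w2 assms by (intro mult_mono) auto
  finally have B: "(e*w)^2 \<le> e" by simp
  have "(u2 + e*w)^2 \<le> 2*u2^2 + 2*(e*w)^2" using sq_diff_le[of u2 "-(e*w)"] by simp
  moreover have "(u1 - e*d*w)^2 \<le> 2*u1^2 + 2*(e*d*w)^2" by (rule sq_diff_le)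
  ultimately show ?thesis using A B lin4 by blast
qed

lemma kernel_props:
  assumes d: "0 < d" "d \<le> 1" and k: "0 < \<kappa>" and N: "0 < N" and N2: "real N2 = d * real N"
    and kN: "\<kappa> / real N \<le> 1" and x: "x \<in> dom_D"
  shows "set_pmf (trans_kernel d \<kappa> N N2 x) \<subseteq> dom_D"
    and "finite (set_pmf (trans_kernel d \<kappa> N N2 x))"
    and "measure_pmf.expectation (trans_kernel d \<kappa> N N2 x) (\<lambda>y. (norm (y - x))^2)
           \<le> (2 + 2/d + 4*\<kappa>) / real N"
proof -
  obtain x1 x2 where xx: "x = (x1, x2)" by (cases x)
  from x have x1: "x1 \<in> {0..1}" and x2: "x2 \<in> {0..1}" by (auto simp: dom_D_def xx)
  have N2pos: "0 < N2" using N2 d N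
    by (metis mult_pos_pos of_nat_0_less_iff)
  let ?P = "pair_pmf (binomial_pmf N x1) (binomial_pmf N2 x2)"
  let ?g = "\<lambda>(j1::nat, j2::nat). Amap d \<kappa> N (real j1 / real N, real j2 / real N2)"
  have K: "trans_kernel d \<kappa> N N2 x = map_pmf ?g ?P"
    by (simp add: trans_kernel_def xx)
  have suppP: "set_pmf ?P \<subseteq> {..N} \<times> {..N2}"
    using bin_supp[OF x1, of N] bin_supp[OF x2, of N2] by (auto simp: set_pair_pmf)
  have finP: "finite (set_pmf ?P)"
    by (rule finite_subset[OF suppP]) auto
  have inD: "(real j1 / real N, real j2 / real N2) \<in> dom_D" if "(j1, j2) \<in> set_pmf ?P" for j1 j2
    using suppP that N N2pos by (auto simp: dom_D_def field_simps)
  show "set_pmf (trans_kernel d \<kappa> N N2 x) \<subseteq> dom_D"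
    unfolding K using inD Amap_D[OF d k kN] by auto
  show "finite (set_pmf (trans_kernel d \<kappa> N N2 x))"
    unfolding K using finP by simp
  let ?e = "\<kappa> / real N"
  let ?B = "\<lambda>z. 2 * (real (fst z) / real N - x1)^2 + 2 * (real (snd z) / real N2 - x2)^2 + 4 * ?e"
  have pw: "(norm (?g z - x))^2 \<le> ?B z" if "z \<in> set_pmf ?P" for z
  proof -
    obtain j1 j2 where z: "z = (j1, j2)" by (cases z)
    let ?y1 = "real j1 / real N" and ?y2 = "real j2 / real N2"
    have yD: "(?y1, ?y2) \<in> dom_D" using inD that z by simp
    hence "0 \<le> ?y1" "?y1 \<le> 1" "0 \<le> ?y2" "?y2 \<le> 1" by (auto simp: dom_D_def)
    hence w: "\<bar>?y1 - ?y2\<bar> \<le> 1" unfolding abs_le_iff by linarith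
    have "?g z - x = ((?y1 - x1) - ?e*d*(?y1 - ?y2), (?y2 - x2) + ?e*(?y1 - ?y2))"
      by (simp add: z xx Amap_def Mmat_def algebra_simps)
    hence "(norm (?g z - x))^2 = ((?y1 - x1) - ?e*d*(?y1 - ?y2))^2 + ((?y2 - x2) + ?e*(?y1 - ?y2))^2"
      by (simp add: norm_sq_pair)
    also have "\<dots> \<le> 2*((?y1 - x1)^2 + (?y2 - x2)^2) + 4*?e"
      using k N kN d w by (intro pt_bound) auto
    finally show ?thesis by (simp add: z)
  qed
  have "measure_pmf.expectation (trans_kernel d \<kappa> N N2 x) (\<lambda>y. (norm (y - x))^2)
      = measure_pmf.expectation ?P (\<lambda>z. (norm (?g z - x))^2)"
    unfolding K by simp
  also have "\<dots> \<le> measure_pmf.expectation ?P ?B"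
    using pw finP by (intro integral_mono_AE) (auto simp: AE_measure_pmf_iff intro!: integrable_measure_pmf_finite)
  also have "\<dots> = 2 * measure_pmf.expectation ?P (\<lambda>z. (real (fst z) / real N - x1)^2)
         + 2 * measure_pmf.expectation ?P (\<lambda>z. (real (snd z) / real N2 - x2)^2) + 4 * ?e"
    using finP by (simp add: integrable_measure_pmf_finite)
  also have "\<dots> = 2 * (x1 * (1 - x1) / real N) + 2 * (x2 * (1 - x2) / real N2) + 4 * ?e"
    using binom_var[OF x1, of N] binom_var[OF x2, of N2] N N2pos
      expectation_pair_pmf_fst[where f="\<lambda>k. (real k / real N - x1)^2" and p="binomial_pmf N x1" and q="binomial_pmf N2 x2"]
      expectation_pair_pmf_snd[where f="\<lambda>k. (real k / real N2 - x2)^2" and p="binomial_pmf N x1" and q="binomial_pmf N2 x2"]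
    by simp
  also have "\<dots> \<le> (2 + 2/d + 4*\<kappa>) / real N"
  proof -
    have a: "x1 * (1 - x1) \<le> 1" using x1 by (simp add: mult_le_one)
    have b: "x2 * (1 - x2) \<le> 1" using x2 by (simp add: mult_le_one)
    have "x1 * (1 - x1) / real N \<le> 1 / real N" using a N by (simp add: divide_right_mono)
    moreover have "x2 * (1 - x2) / real N2 \<le> 1 / real N2" using b N2pos by (simp add: divide_right_mono)
    moreover have "1 / real N2 = (1/d) / real N" using N2 by simp
    ultimately show ?thesis by (simp add: add_divide_distrib)
  qed
  finally show "measure_pmf.expectation (trans_kernel d \<kappa> N N2 x) (\<lambda>y. (norm (y - x))^2)
           \<le> (2 + 2/d + 4*\<kappa>) / real N" .
qed



lemma exp_bind_le:
  fixes f :: "'b \<Rightarrow> real"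
  assumes f0: "\<And>y. 0 \<le> f y"
    and int: "\<And>x. x \<in> set_pmf M \<Longrightarrow> integrable (measure_pmf (Nk x)) f"
    and bnd: "\<And>x. x \<in> set_pmf M \<Longrightarrow> measure_pmf.expectation (Nk x) f \<le> c"
    and c0: "0 \<le> c"
  shows "measure_pmf.expectation (bind_pmf M Nk) f \<le> c"
proof -
  have eq: "measure_pmf.expectation (bind_pmf M Nk) f = enn2real (\<integral>\<^sup>+y. ennreal (f y) \<partial>bind_pmf M Nk)"
    by (rule integral_eq_nn_integral) (auto simp: f0)
  have "(\<integral>\<^sup>+y. ennreal (f y) \<partial>bind_pmf M Nk) = (\<integral>\<^sup>+x. \<integral>\<^sup>+y. ennreal (f y) \<partial>Nk x \<partial>M)"
    by simp
  also have "\<dots> \<le> (\<integral>\<^sup>+x. ennreal c \<partial>M)"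
  proof (rule nn_integral_mono_AE)
    show "AE x in measure_pmf M. (\<integral>\<^sup>+y. ennreal (f y) \<partial>Nk x) \<le> ennreal c"
      unfolding AE_measure_pmf_iff
    proof
      fix x assume x: "x \<in> set_pmf M"
      have "(\<integral>\<^sup>+y. ennreal (f y) \<partial>Nk x) = ennreal (measure_pmf.expectation (Nk x) f)"
        by (rule nn_integral_eq_integral) (auto simp: int[OF x] f0)
      also have "\<dots> \<le> ennreal c" using bnd[OF x] by (rule ennreal_leI)
      finally show "(\<integral>\<^sup>+y. ennreal (f y) \<partial>Nk x) \<le> ennreal c" .
    qed
  qed
  also have "\<dots> = ennreal c" by simp
  finally have "(\<integral>\<^sup>+y. ennreal (f y) \<partial>bind_pmf M Nk) \<le> ennreal c" .
  then have "enn2real (\<integral>\<^sup>+y. ennreal (f y) \<partial>bind_pmf M Nk) \<le> enn2real (ennreal c)"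
    by (intro enn2real_mono) auto
  then show ?thesis using eq c0 by simp
qed

lemma chain_supp:
  assumes d: "0 < d" "d \<le> 1" and k: "0 < \<kappa>" and N: "0 < N" and N2: "real N2 = d * real N"
    and kN: "\<kappa> / real N \<le> 1" and p0: "set_pmf p0 \<subseteq> dom_D"
  shows "\<forall>xs\<in>set_pmf (chain_path d \<kappa> N N2 p0 m). length xs = Suc m \<and> last xs \<in> dom_D"
proof (induction m)
  case 0
  then show ?case using p0 by auto
next
  case (Suc m)
  show ?case
  proof
    fix zs assume "zs \<in> set_pmf (chain_path d \<kappa> N N2 p0 (Suc m))"
    then obtain xs y where xs: "xs \<in> set_pmf (chain_path d \<kappa> N N2 p0 m)"
      and y: "y \<in> set_pmf (trans_kernel d \<kappa> N N2 (last xs))" and zs: "zs = xs @ [y]"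
      by auto
    have "y \<in> dom_D" using kernel_props(1)[OF d k N N2 kN] Suc.IH xs y by blast
    then show "length zs = Suc (Suc m) \<and> last zs \<in> dom_D" using Suc.IH xs zs by simp
  qed
qed



theorem corollary1:
  fixes d \<kappa> :: real
  assumes "0 < d" and "d \<le> 1" and "0 < \<kappa>"
  shows "\<exists>C. \<forall>(N::nat) (N2::nat) (p0 :: (real \<times> real) pmf) (t::real).
           0 < N \<and> real N2 = d * real N \<and> \<kappa> * dt N \<le> 1 \<and> set_pmf p0 \<subseteq> dom_D \<and> 0 \<le> t \<longrightarrow>
           measure_pmf.expectation (chain_path d \<kappa> N N2 p0 (Suc (step_idx N t)))
             (\<lambda>xs. (norm (xbar N t xs - xlin N t xs))\<^sup>2) \<le> C / real N"
proof -
  have d: "0 < d" "d \<le> 1" and k: "0 < \<kappa>" using assms by auto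
  define C where "C = 2 + 2/d + 4*\<kappa>"
  have C0: "0 \<le> C" unfolding C_def using assms by simp
  show ?thesis
  proof (intro exI[of _ C] allI impI)
    fix N N2 :: nat and p0 :: "(real \<times> real) pmf" and t :: real
    assume H: "0 < N \<and> real N2 = d * real N \<and> \<kappa> * dt N \<le> 1 \<and> set_pmf p0 \<subseteq> dom_D \<and> 0 \<le> t"
    then have N: "0 < N" and N2: "real N2 = d * real N" and kdt: "\<kappa> * dt N \<le> 1"
      and p0: "set_pmf p0 \<subseteq> dom_D" and t: "0 \<le> t" by auto
    have kN: "\<kappa> / real N \<le> 1" using kdt by (simp add: dt_def)
    define n where "n = step_idx N t"
    define s where "s = (t - real n * dt N) / dt N"
    have tN: "t / dt N = t * real N" by (simp add: dt_def)
    have fl0: "0 \<le> \<lfloor>t * real N\<rfloor>" using t by simp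
    have rn: "real n = real_of_int \<lfloor>t * real N\<rfloor>"
      unfolding n_def step_idx_def tN using fl0 by simp
    have s_eq: "s = t * real N - real n"
      using N unfolding s_def by (simp add: dt_def field_simps)
    have s0: "0 \<le> s" unfolding s_eq rn by linarith
    have s1: "s \<le> 1" unfolding s_eq rn by linarith
    let ?g = "\<lambda>xs. (norm (xbar N t xs - xlin N t xs))\<^sup>2"
    have key: "?g (xs @ [y]) \<le> (norm (y - last xs))^2" if len: "length xs = Suc n" for xs y
    proof -
      have ne: "xs \<noteq> []" using len by auto
      have "last xs = xs ! n" using last_conv_nth[OF ne] len by simp
      then have a: "(xs @ [y]) ! n = last xs" using len by (simp add: nth_append)
      have b: "(xs @ [y]) ! Suc n = y" using len by (simp add: nth_append)
      have "xbar N t (xs @ [y]) - xlin N t (xs @ [y]) = - (s *\<^sub>R (y - last xs))"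
        unfolding xbar_def xlin_def Let_def n_def[symmetric] s_def[symmetric] a b by simp
      hence "?g (xs @ [y]) = s^2 * (norm (y - last xs))^2"
        using s0 by (simp add: power_mult_distrib)
      also have "\<dots> \<le> 1 * (norm (y - last xs))^2"
        using s0 s1 by (intro mult_right_mono) (auto simp: power_le_one)
      finally show ?thesis by simp
    qed
    have chain: "chain_path d \<kappa> N N2 p0 (Suc n) = bind_pmf (chain_path d \<kappa> N N2 p0 n)
       (\<lambda>xs. map_pmf (\<lambda>y. xs @ [y]) (trans_kernel d \<kappa> N N2 (last xs)))" by simp
    have "measure_pmf.expectation (chain_path d \<kappa> N N2 p0 (Suc n)) ?g \<le> C / real N"
      unfolding chain
    proof (rule exp_bind_le)
      show "0 \<le> ?g y" for y by simp
      show "0 \<le> C / real N" using C0 by simp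
      fix xs assume xs: "xs \<in> set_pmf (chain_path d \<kappa> N N2 p0 n)"
      have xsp: "length xs = Suc n" "last xs \<in> dom_D"
        using chain_supp[OF d k N N2 kN p0, of n] xs by auto
      have fin: "finite (set_pmf (trans_kernel d \<kappa> N N2 (last xs)))"
        using kernel_props(2)[OF d k N N2 kN xsp(2)] .
      show "integrable (measure_pmf (map_pmf (\<lambda>y. xs @ [y]) (trans_kernel d \<kappa> N N2 (last xs)))) ?g"
        using fin by (intro integrable_measure_pmf_finite) simp
      have "measure_pmf.expectation (map_pmf (\<lambda>y. xs @ [y]) (trans_kernel d \<kappa> N N2 (last xs))) ?g
          = measure_pmf.expectation (trans_kernel d \<kappa> N N2 (last xs)) (\<lambda>y. ?g (xs @ [y]))"
        by simp
      also have "\<dots> \<le> measure_pmf.expectation (trans_kernel d \<kappa> N N2 (last xs)) (\<lambda>y. (norm (y - last xs))^2)"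
        using fin key[OF xsp(1)] by (intro integral_mono) (auto intro: integrable_measure_pmf_finite)
      also have "\<dots> \<le> (2 + 2/d + 4*\<kappa>) / real N"
        using kernel_props(3)[OF d k N N2 kN xsp(2)] .
      finally show "measure_pmf.expectation (map_pmf (\<lambda>y. xs @ [y]) (trans_kernel d \<kappa> N N2 (last xs))) ?g \<le> C / real N"
        unfolding C_def .
    qed
    then show "measure_pmf.expectation (chain_path d \<kappa> N N2 p0 (Suc (step_idx N t)))
             (\<lambda>xs. (norm (xbar N t xs - xlin N t xs))\<^sup>2) \<le> C / real N"
      unfolding n_def .
  qed
qed

end
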